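(* Let $\mathbf V$ be a variety of $\mathscr J$-trivial monoids. Then $A_0^1\notin\mathbf V$ if and only if $\mathbf V$ is a variety of aperiodic monoids with commuting idempotents (i.e., in every monoid of $\mathbf V$ all subgroups are trivial and any two idempotents commute).
   Context: A monoid $S$ is $\mathscr J$-trivial if $SaS=SbS$ implies $a=b$. $A_0=\langle e,f\mid e^2=e,\ f^2=f,\ fe=0\rangle=\{e,f,ef,0\}$ and $A_0^1$ is $A_0$ with a new identity element adjoined. *)

theory Defs
  imports "HOL-Algebra.Group"
begin

section \<open>Monoid identities and varieties (Birkhoff: variety = class of models of identities)\<close>

type_synonym word = "nat list"

definition word_eval :: "('a, 'b) monoid_scheme \<Rightarrow> (nat \<Rightarrow> 'a) \<Rightarrow> word \<Rightarrow> 'a" where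
  "word_eval M \<sigma> w = foldr (\<lambda>x acc. \<sigma> x \<otimes>\<^bsub>M\<^esub> acc) w \<one>\<^bsub>M\<^esub>"

definition satisfies_id :: "('a, 'b) monoid_scheme \<Rightarrow> word \<times> word \<Rightarrow> bool" where
  "satisfies_id M uv \<longleftrightarrow>
     (\<forall>\<sigma>. (\<forall>x. \<sigma> x \<in> carrier M) \<longrightarrow> word_eval M \<sigma> (fst uv) = word_eval M \<sigma> (snd uv))"

definition in_variety :: "(word \<times> word) set \<Rightarrow> ('a, 'b) monoid_scheme \<Rightarrow> bool" where
  "in_variety \<Sigma> M \<longleftrightarrow> monoid M \<and> (\<forall>uv\<in>\<Sigma>. satisfies_id M uv)"

definition J_trivial :: "('a, 'b) monoid_scheme \<Rightarrow> bool" where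
  "J_trivial M \<longleftrightarrow> (\<forall>a\<in>carrier M. \<forall>b\<in>carrier M.
     {x \<otimes>\<^bsub>M\<^esub> a \<otimes>\<^bsub>M\<^esub> y | x y. x \<in> carrier M \<and> y \<in> carrier M} =
     {x \<otimes>\<^bsub>M\<^esub> b \<otimes>\<^bsub>M\<^esub> y | x y. x \<in> carrier M \<and> y \<in> carrier M} \<longrightarrow> a = b)"

definition aperiodic :: "('a, 'b) monoid_scheme \<Rightarrow> bool" where
  "aperiodic M \<longleftrightarrow> (\<forall>H e. H \<subseteq> carrier M \<and>
     group \<lparr>carrier = H, mult = mult M, one = e\<rparr> \<longrightarrow> H = {e})"

definition commuting_idempotents :: "('a, 'b) monoid_scheme \<Rightarrow> bool" where
  "commuting_idempotents M \<longleftrightarrow> (\<forall>e\<in>carrier M. \<forall>f\<in>carrier M.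
     e \<otimes>\<^bsub>M\<^esub> e = e \<and> f \<otimes>\<^bsub>M\<^esub> f = f \<longrightarrow> e \<otimes>\<^bsub>M\<^esub> f = f \<otimes>\<^bsub>M\<^esub> e)"

datatype a0 = I | E | F | EF | Z

fun a0_mult :: "a0 \<Rightarrow> a0 \<Rightarrow> a0" where
  "a0_mult I x = x"
| "a0_mult x I = x"
| "a0_mult E E = E"
| "a0_mult E F = EF"
| "a0_mult E EF = EF"
| "a0_mult F F = F"
| "a0_mult EF F = EF"
| "a0_mult _ _ = Z"

definition A0_1 :: "a0 monoid" where
  "A0_1 = \<lparr>carrier = UNIV, mult = a0_mult, one = I\<rparr>"

end

theory Submission
  imports Defs
begin

lemma we_Nil[simp]: "word_eval M \<sigma> [] = \<one>\<^bsub>M\<^esub>"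
  by (simp add: word_eval_def)

lemma we_Cons[simp]: "word_eval M \<sigma> (x # w) = \<sigma> x \<otimes>\<^bsub>M\<^esub> word_eval M \<sigma> w"
  by (simp add: word_eval_def)

lemma a0_assoc: "a0_mult (a0_mult x y) z = a0_mult x (a0_mult y z)"
  by (cases x; cases y; cases z) auto

lemma a0_r_one[simp]: "a0_mult x I = x"
  by (cases x) auto

lemma A0_monoid: "monoid A0_1"
  by unfold_locales (auto simp: A0_1_def a0_assoc)

definition idl :: "('a, 'b) monoid_scheme \<Rightarrow> 'a \<Rightarrow> 'a set" where
  "idl M a = {x \<otimes>\<^bsub>M\<^esub> a \<otimes>\<^bsub>M\<^esub> y | x y. x \<in> carrier M \<and> y \<in> carrier M}"

lemma J_trivial_idl: "J_trivial M \<longleftrightarrow> (\<forall>a\<in>carrier M. \<forall>b\<in>carrier M. idl M a = idl M b \<longrightarrow> a = b)"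
  by (simp add: J_trivial_def idl_def)

lemma (in monoid) idl_mono:
  assumes y: "y \<in> carrier G" and x: "x \<in> idl G y"
  shows "idl G x \<subseteq> idl G y"
proof
  fix z assume "z \<in> idl G x"
  then obtain p q where pq: "p \<in> carrier G" "q \<in> carrier G" "z = p \<otimes> x \<otimes> q"
    by (auto simp: idl_def)
  from x obtain p' q' where pq': "p' \<in> carrier G" "q' \<in> carrier G" "x = p' \<otimes> y \<otimes> q'"
    by (auto simp: idl_def)
  have "z = (p \<otimes> p') \<otimes> y \<otimes> (q' \<otimes> q)"
    using pq pq' y by (simp add: m_assoc)
  then show "z \<in> idl G y" using pq pq' by (auto simp: idl_def)
qed

lemma (in monoid) idl_mem:
  assumes "x \<in> carrier G" "y \<in> carrier G" "t \<in> carrier G" "z = x \<otimes> t \<otimes> y"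
  shows "z \<in> idl G t"
  using assms unfolding idl_def by blast

lemma J_triv_aperiodic:
  assumes mon: "monoid M" and J: "J_trivial M"
  shows "aperiodic M"
  unfolding aperiodic_def
proof (intro allI impI, elim conjE)
  fix H e
  assume HM: "H \<subseteq> carrier M" and g: "group \<lparr>carrier = H, mult = mult M, one = e\<rparr>"
  interpret M: monoid M by (rule mon)
  interpret G: group "\<lparr>carrier = H, mult = mult M, one = e\<rparr>" by (rule g)
  have eH: "e \<in> H" using G.one_closed by simp
  have "h = e" if hH: "h \<in> H" for h
  proof -
    obtain h' where h': "h' \<in> H" "h' \<otimes>\<^bsub>M\<^esub> h = e"
      using G.l_inv_ex[of h] hH by auto
    have he: "h \<otimes>\<^bsub>M\<^esub> e = h" using G.r_one[of h] hH by simp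
    have c: "h \<in> carrier M" "e \<in> carrier M" "h' \<in> carrier M" using HM hH eH h' by auto
    have "idl M h \<subseteq> idl M e"
      apply (rule M.idl_mono[OF c(2)])
      apply (rule M.idl_mem[of h "\<one>\<^bsub>M\<^esub>"])
      using c he by auto
    moreover have "idl M e \<subseteq> idl M h"
      apply (rule M.idl_mono[OF c(1)])
      apply (rule M.idl_mem[of h' "\<one>\<^bsub>M\<^esub>"])
      using c h' by auto
    ultimately show ?thesis using J c unfolding J_trivial_idl by blast
  qed
  then show "H = {e}" using eH by blast
qed


lemma (in monoid) A0_in_var_if:
  assumes sat: "\<forall>uv\<in>\<Sigma>. satisfies_id G uv"
    and a: "a \<in> carrier G" and b: "b \<in> carrier G"
    and aa: "a \<otimes> a = a" and bb: "b \<otimes> b = b"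
    and nd: "a \<otimes> b \<notin> idl G (b \<otimes> a)"
  shows "in_variety \<Sigma> A0_1"
proof -
  define T where "T = idl G (b \<otimes> a)"
  have ba: "b \<otimes> a \<in> carrier G" using a b by simp
  have Tc: "T \<subseteq> carrier G" using ba by (auto simp: T_def idl_def)
  have baT: "b \<otimes> a \<in> T" unfolding T_def by (rule idl_mem[of \<one> \<one>]) (use ba in auto)
  have TL: "m \<otimes> t \<in> T" if "m \<in> carrier G" "t \<in> T" for m t
  proof -
    from that obtain p q where pq: "p \<in> carrier G" "q \<in> carrier G" "t = p \<otimes> (b \<otimes> a) \<otimes> q"
      by (auto simp: T_def idl_def)
    show ?thesis unfolding T_def
      by (rule idl_mem[of "m \<otimes> p" q]) (use pq that ba in \<open>auto simp: m_assoc\<close>)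
  qed
  have TR: "t \<otimes> m \<in> T" if "m \<in> carrier G" "t \<in> T" for m t
  proof -
    from that obtain p q where pq: "p \<in> carrier G" "q \<in> carrier G" "t = p \<otimes> (b \<otimes> a) \<otimes> q"
      by (auto simp: T_def idl_def)
    show ?thesis unfolding T_def
      by (rule idl_mem[of p "q \<otimes> m"]) (use pq that ba in \<open>auto simp: m_assoc\<close>)
  qed
  have abT: "a \<otimes> b \<notin> T" using nd by (simp add: T_def)
  have aT: "a \<notin> T" using TR[of b a] b abT by blast
  have bT: "b \<notin> T" using TL[of a b] a abT by blast
  have oT: "\<one> \<notin> T" using TL[of a \<one>] a aT by auto
  have ab_b: "a \<noteq> b" using abT baT aa by auto
  have o_a: "\<one> \<noteq> a" using abT baT b by auto
  have o_b: "\<one> \<noteq> b" using abT baT a by auto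
  have o_ab: "\<one> \<noteq> a \<otimes> b"
  proof
    assume h: "\<one> = a \<otimes> b"
    have "a = a \<otimes> (a \<otimes> b)" using a by (simp flip: h)
    also have "\<dots> = a \<otimes> b" using aa a b by (simp flip: m_assoc)
    finally show False using h o_a by simp
  qed
  have a_ab: "a \<noteq> a \<otimes> b"
  proof
    assume h: "a = a \<otimes> b"
    have "a = (a \<otimes> b) \<otimes> a" using h aa by simp
    also have "\<dots> = a \<otimes> (b \<otimes> a) \<otimes> \<one>" using a b by (simp add: m_assoc)
    finally have "a \<in> T" unfolding T_def by (rule idl_mem[rotated 3]) (use a b in auto)
    then show False using aT by simp
  qed
  have b_ab: "b \<noteq> a \<otimes> b"
  proof
    assume h: "b = a \<otimes> b"
    have "b = b \<otimes> (a \<otimes> b)" using h bb by simp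
    also have "\<dots> = \<one> \<otimes> (b \<otimes> a) \<otimes> b" using a b by (simp add: m_assoc)
    finally have "b \<in> T" unfolding T_def by (rule idl_mem[rotated 3]) (use a b in auto)
    then show False using bT by simp
  qed
  define psi where "psi = (\<lambda>x. case x of I \<Rightarrow> \<one> | E \<Rightarrow> a | F \<Rightarrow> b | EF \<Rightarrow> a \<otimes> b | Z \<Rightarrow> b \<otimes> a)"
  define phi where "phi = (\<lambda>m. if m = \<one> then I else if m = a then E else if m = b then F
      else if m = a \<otimes> b then EF else Z)"
  define S where "S = {\<one>, a, b, a \<otimes> b} \<union> T"
  have psic: "psi x \<in> carrier G" for x using a b by (cases x) (auto simp: psi_def)
  have phi1: "phi \<one> = I" "phi a = E" "phi b = F" "phi (a \<otimes> b) = EF"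
    using o_a o_b o_ab ab_b a_ab b_ab by (auto simp: phi_def)
  have phiT: "t \<in> T \<Longrightarrow> phi t = Z" for t using oT aT bT abT by (auto simp: phi_def)
  have Sc: "S \<subseteq> carrier G" using Tc a b by (auto simp: S_def)
  have aab: "a \<otimes> (a \<otimes> b) = a \<otimes> b" using aa a b by (simp flip: m_assoc)
  have abb: "(a \<otimes> b) \<otimes> b = a \<otimes> b" using bb a b by (simp add: m_assoc)
  have bab: "b \<otimes> (a \<otimes> b) \<in> T" using TR[OF b baT] a b by (simp add: m_assoc)
  have aba: "a \<otimes> b \<otimes> a \<in> T" using TL[OF a baT] a b by (simp add: m_assoc)
  have abab: "a \<otimes> b \<otimes> (a \<otimes> b) \<in> T" using TR[OF b aba] a b by (simp add: m_assoc)
  have key: "psi x \<otimes> m \<in> S \<and> phi (psi x \<otimes> m) = a0_mult x (phi m)" if m: "m \<in> S" for x m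
  proof -
    have mc: "m \<in> carrier G" using m Sc by auto
    have zT: "b \<otimes> a \<otimes> m \<in> T" using TR[OF mc baT] .
    consider "m = \<one>" | "m = a" | "m = b" | "m = a \<otimes> b" | "m \<in> T" using m by (auto simp: S_def)
    then show ?thesis
    proof cases
      case 1 then show ?thesis using psic[of x] phi1 phiT baT
        using zT mc by (cases x) (auto simp: psi_def S_def)
    next
      case 2 then show ?thesis using phi1 phiT baT aa aba a b
        using zT mc by (cases x) (auto simp: psi_def S_def)
    next
      case 3 then show ?thesis using phi1 phiT baT bb bab abb a b TR
        using zT mc by (cases x) (auto simp: psi_def S_def)
    next
      case 4 then show ?thesis using phi1 phiT aab abab bab TL[OF ba baT] a b
        using zT mc by (cases x) (auto simp: psi_def S_def)
    next
      case 5 then show ?thesis using phi1 phiT TL psic[of x]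
        using zT mc by (cases x) (auto simp: psi_def S_def)
    qed
  qed
  have ind: "word_eval G (psi \<circ> \<sigma>) w \<in> S \<and> phi (word_eval G (psi \<circ> \<sigma>) w) = word_eval A0_1 \<sigma> w" for \<sigma> w
  proof (induction w)
    case Nil then show ?case using phi1 by (simp add: S_def A0_1_def)
  next
    case (Cons x w)
    then show ?case using key[of "word_eval G (psi \<circ> \<sigma>) w" "\<sigma> x"] unfolding comp_def by (simp add: A0_1_def)
  qed
  have "satisfies_id A0_1 uv" if "uv \<in> \<Sigma>" for uv
    unfolding satisfies_id_def
  proof (intro allI impI)
    fix \<sigma> :: "nat \<Rightarrow> a0"
    have "word_eval G (psi \<circ> \<sigma>) (fst uv) = word_eval G (psi \<circ> \<sigma>) (snd uv)"
      using sat that psic unfolding satisfies_id_def by auto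
    then show "word_eval A0_1 \<sigma> (fst uv) = word_eval A0_1 \<sigma> (snd uv)"
      using ind by metis
  qed
  then show ?thesis using A0_monoid by (simp add: in_variety_def)
qed


lemma copy_A0:
  assumes inf: "infinite (UNIV :: 'a set)" and A: "in_variety \<Sigma> A0_1"
  shows "\<exists>M :: 'a monoid. in_variety \<Sigma> M \<and> \<not> commuting_idempotents M"
proof -
  obtain g :: "nat \<Rightarrow> 'a" where g: "inj g"
    using infinite_countable_subset[OF inf] by auto
  define enc :: "a0 \<Rightarrow> nat" where "enc = (\<lambda>x. case x of I \<Rightarrow> 0 | E \<Rightarrow> 1 | F \<Rightarrow> 2 | EF \<Rightarrow> 3 | Z \<Rightarrow> 4)"
  have "inj enc" unfolding inj_def enc_def
    by (intro allI; case_tac x; case_tac y; simp)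
  define h where "h = g \<circ> enc"
  have h: "inj h" unfolding h_def using g \<open>inj enc\<close> by (rule inj_compose)
  have hi[simp]: "inv_into UNIV h (h x) = x" for x using h by simp
  define M :: "'a monoid" where "M = \<lparr>carrier = range h, mult = \<lambda>x y. h (a0_mult (inv_into UNIV h x) (inv_into UNIV h y)), one = h I\<rparr>"
  have mon: "monoid M"
    by unfold_locales (auto simp: M_def a0_assoc)
  have we: "word_eval M \<sigma> w = h (word_eval A0_1 (inv_into UNIV h \<circ> \<sigma>) w)" if r0: "\<forall>x. \<sigma> x \<in> range h" for \<sigma> w
  proof (induction w)
    case Nil then show ?case by (simp add: M_def A0_1_def)
  next
    case (Cons x w)
    obtain y where y: "\<sigma> x = h y" using r0 by blast
    show ?case using Cons y by (simp add: M_def A0_1_def)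
  qed
  have "satisfies_id M uv" if uv: "uv \<in> \<Sigma>" for uv
    unfolding satisfies_id_def
  proof (intro allI impI)
    fix \<sigma> :: "nat \<Rightarrow> 'a" assume "\<forall>x. \<sigma> x \<in> carrier M"
    then have r: "\<forall>x. \<sigma> x \<in> range h" by (simp add: M_def)
    have "word_eval A0_1 (inv_into UNIV h \<circ> \<sigma>) (fst uv) = word_eval A0_1 (inv_into UNIV h \<circ> \<sigma>) (snd uv)"
      using A uv unfolding in_variety_def satisfies_id_def by (auto simp: A0_1_def)
    then show "word_eval M \<sigma> (fst uv) = word_eval M \<sigma> (snd uv)" using we[OF r] by simp
  qed
  then have "in_variety \<Sigma> M" using mon by (simp add: in_variety_def)
  moreover have "\<not> commuting_idempotents M"
  proof
    assume "commuting_idempotents M"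
    then have "h EF = h Z" unfolding commuting_idempotents_def
      apply (simp add: M_def)
      apply (drule spec[where x = E], drule spec[where x = F])
      by simp
    then show False using h by (simp add: inj_eq)
  qed
  ultimately show ?thesis by blast
qed

theorem fact6p4:
  fixes \<Sigma> :: "(word \<times> word) set"
  assumes inf: "infinite (UNIV :: 'a set)"
    and Jtriv: "\<forall>M :: 'a monoid. in_variety \<Sigma> M \<longrightarrow> J_trivial M"
  shows "(\<not> in_variety \<Sigma> A0_1) \<longleftrightarrow>
         (\<forall>M :: 'a monoid. in_variety \<Sigma> M \<longrightarrow> aperiodic M \<and> commuting_idempotents M)"
proof
  assume nA: "\<not> in_variety \<Sigma> A0_1"
  show "\<forall>M :: 'a monoid. in_variety \<Sigma> M \<longrightarrow> aperiodic M \<and> commuting_idempotents M"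
  proof (intro allI impI conjI)
    fix M :: "'a monoid" assume V: "in_variety \<Sigma> M"
    have mon: "monoid M" and sat: "\<forall>uv\<in>\<Sigma>. satisfies_id M uv" using V by (auto simp: in_variety_def)
    have J: "J_trivial M" using Jtriv V by blast
    then show "aperiodic M" using J_triv_aperiodic mon by blast
    interpret monoid M by (rule mon)
    show "commuting_idempotents M"
      unfolding commuting_idempotents_def
    proof (intro ballI impI, rule ccontr)
      fix e f assume e: "e \<in> carrier M" and f: "f \<in> carrier M"
        and idem: "e \<otimes>\<^bsub>M\<^esub> e = e \<and> f \<otimes>\<^bsub>M\<^esub> f = f" and ne: "e \<otimes>\<^bsub>M\<^esub> f \<noteq> f \<otimes>\<^bsub>M\<^esub> e"
      show False
      proof (cases "e \<otimes>\<^bsub>M\<^esub> f \<in> idl M (f \<otimes>\<^bsub>M\<^esub> e)")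
        case False
        then show False using A0_in_var_if[OF sat e f] idem nA by blast
      next
        case True
        have "f \<otimes>\<^bsub>M\<^esub> e \<notin> idl M (e \<otimes>\<^bsub>M\<^esub> f)"
        proof
          assume T2: "f \<otimes>\<^bsub>M\<^esub> e \<in> idl M (e \<otimes>\<^bsub>M\<^esub> f)"
          have "idl M (e \<otimes>\<^bsub>M\<^esub> f) = idl M (f \<otimes>\<^bsub>M\<^esub> e)"
            using idl_mono[OF _ True] idl_mono[OF _ T2] e f by blast
          then show False using J ne e f unfolding J_trivial_idl by blast
        qed
        then show False using A0_in_var_if[OF sat f e] idem nA by blast
      qed
    qed
  qed
next
  assume all: "\<forall>M :: 'a monoid. in_variety \<Sigma> M \<longrightarrow> aperiodic M \<and> commuting_idempotents M"
  show "\<not> in_variety \<Sigma> A0_1"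
    using copy_A0[OF inf] all by blast
qed

end
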